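(* Let $1\le p\le\infty$, $E$ a Banach space, $Y$ a Banach lattice and $T:E\to Y$ a bounded linear operator. Then $T$ is positive $p$-majorizing if and only if $T$ is positive strongly $p$-summing.
   Context: $p^{\ast}$ is the conjugate exponent of $p$; for a finite family $(y_i^{\ast})$ in $Y^{\ast}$, $\|(y_i^{\ast})\|_{p^{\ast},\omega}=\sup_{y\in B_{Y}}\|(\langle y_i^{\ast},y\rangle)_i\|_{p^{\ast}}$. $T$ is positive $p$-majorizing if there is $C>0$ with $(\sum_{i=1}^n|\langle T(z_i),y_i^{\ast}\rangle|^{p^{\ast}})^{1/p^{\ast}}\le C\|(y_i^{\ast})_{i=1}^n\|_{p^{\ast},\omega}$ for all $n$, $z_i\in B_E$ and positive $y_i^{\ast}\in Y^{\ast}$. $T$ is positive strongly $p$-summing if there is $C>0$ with $\sum_{i=1}^n|\langle T(x_i),y_i^{\ast}\rangle|\le C(\sum_i\|x_i\|^p)^{1/p}\|(y_i^{\ast})_{i=1}^n\|_{p^{\ast},\omega}$ for all $n$, $x_i\in E$ and positive $y_i^{\ast}\in Y^{\ast}$. *)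

theory Defs
  imports "HOL-Analysis.Analysis"
begin

text \<open>Exponents p range over [1, \<infinity>], represented as extended reals.\<close>

definition conj_exp :: "ereal \<Rightarrow> ereal" where
  "conj_exp p = (if p = 1 then \<infinity> else if p = \<infinity> then 1
                 else ereal (real_of_ereal p / (real_of_ereal p - 1)))"

definition lq_norm :: "ereal \<Rightarrow> nat \<Rightarrow> (nat \<Rightarrow> real) \<Rightarrow> real" where
  "lq_norm q n a = (if q = \<infinity> then Max (insert 0 ((\<lambda>i. \<bar>a i\<bar>) ` {..<n}))
     else (\<Sum>i<n. \<bar>a i\<bar> powr real_of_ereal q) powr (1 / real_of_ereal q))"

definition weak_norm :: "ereal \<Rightarrow> nat \<Rightarrow> (nat \<Rightarrow> 'b::real_normed_vector \<Rightarrow> real) \<Rightarrow> real" where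
  "weak_norm q n f = (SUP y\<in>{y::'b. norm y \<le> 1}. lq_norm q n (\<lambda>i. f i y))"

text \<open>Banach lattice: a Banach space whose order makes it a vector lattice
  (ordered real vector space + lattice) with lattice norm.\<close>
definition lat_abs :: "'b::{ab_group_add, lattice} \<Rightarrow> 'b" where
  "lat_abs x = sup x (- x)"

definition banach_lattice_norm :: "'b::{banach, ordered_real_vector, lattice} itself \<Rightarrow> bool" where
  "banach_lattice_norm _ \<longleftrightarrow> (\<forall>x y::'b. lat_abs x \<le> lat_abs y \<longrightarrow> norm x \<le> norm y)"

definition pos_dual :: "('b::{real_normed_vector, order} \<Rightarrow> real) \<Rightarrow> bool" where
  "pos_dual f \<longleftrightarrow> bounded_linear f \<and> (\<forall>y. 0 \<le> y \<longrightarrow> 0 \<le> f y)"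

definition pos_p_majorizing :: "ereal \<Rightarrow> ('a::real_normed_vector \<Rightarrow> 'b::{real_normed_vector, order}) \<Rightarrow> bool" where
  "pos_p_majorizing p T \<longleftrightarrow> (\<exists>C>0. \<forall>n (z::nat \<Rightarrow> 'a) (f::nat \<Rightarrow> 'b \<Rightarrow> real).
     (\<forall>i<n. norm (z i) \<le> 1) \<longrightarrow> (\<forall>i<n. pos_dual (f i)) \<longrightarrow>
     lq_norm (conj_exp p) n (\<lambda>i. f i (T (z i))) \<le> C * weak_norm (conj_exp p) n f)"

definition pos_strongly_p_summing :: "ereal \<Rightarrow> ('a::real_normed_vector \<Rightarrow> 'b::{real_normed_vector, order}) \<Rightarrow> bool" where
  "pos_strongly_p_summing p T \<longleftrightarrow> (\<exists>C>0. \<forall>n (x::nat \<Rightarrow> 'a) (f::nat \<Rightarrow> 'b \<Rightarrow> real).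
     (\<forall>i<n. pos_dual (f i)) \<longrightarrow>
     (\<Sum>i<n. \<bar>f i (T (x i))\<bar>) \<le> C * lq_norm p n (\<lambda>i. norm (x i)) * weak_norm (conj_exp p) n f)"

end

theory Submission
  imports Defs
begin

lemma lq_nonneg: "0 \<le> lq_norm q n a"
  unfolding lq_norm_def by (auto intro: Max_ge)

lemma conj_exp_ge1: "1 \<le> p \<Longrightarrow> 1 \<le> conj_exp p"
proof -
  assume p: "1 \<le> p"
  show ?thesis
  proof (cases "p = 1 \<or> p = \<infinity>")
    case True then show ?thesis by (auto simp: conj_exp_def)
  next
    case False
    then obtain r where r: "p = ereal r" "r > 1" using p
      by (cases p) auto
    then show ?thesis using False by (simp add: conj_exp_def field_simps)
  qed
qed

lemma lq_mono:
  assumes "0 \<le> q" "\<forall>i<n. \<bar>u i\<bar> \<le> \<bar>v i\<bar>"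
  shows "lq_norm q n u \<le> lq_norm q n v"
proof (cases "q = \<infinity>")
  case True
  have "Max (insert 0 ((\<lambda>i. \<bar>u i\<bar>) ` {..<n})) \<le> Max (insert 0 ((\<lambda>i. \<bar>v i\<bar>) ` {..<n}))"
  proof (subst Max_le_iff, simp, simp, intro ballI)
    fix x assume "x \<in> insert 0 ((\<lambda>i. \<bar>u i\<bar>) ` {..<n})"
    then show "x \<le> Max (insert 0 ((\<lambda>i. \<bar>v i\<bar>) ` {..<n}))"
    proof
      assume "x = 0" then show ?thesis by (auto intro: Max_ge)
    next
      assume "x \<in> (\<lambda>i. \<bar>u i\<bar>) ` {..<n}"
      then obtain i where "i < n" "x = \<bar>u i\<bar>" by auto
      then have "x \<le> \<bar>v i\<bar>" using assms by auto
      also have "\<dots> \<le> Max (insert 0 ((\<lambda>i. \<bar>v i\<bar>) ` {..<n}))"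
        using \<open>i < n\<close> by (auto intro: Max_ge)
      finally show ?thesis .
    qed
  qed
  then show ?thesis using True by (simp add: lq_norm_def)
next
  case False
  have r: "0 \<le> real_of_ereal q" using assms(1) by (simp add: real_of_ereal_pos)
  have "(\<Sum>i<n. \<bar>u i\<bar> powr real_of_ereal q) \<le> (\<Sum>i<n. \<bar>v i\<bar> powr real_of_ereal q)"
    using assms r by (intro sum_mono powr_mono2) auto
  then have "(\<Sum>i<n. \<bar>u i\<bar> powr real_of_ereal q) powr (1 / real_of_ereal q)
     \<le> (\<Sum>i<n. \<bar>v i\<bar> powr real_of_ereal q) powr (1 / real_of_ereal q)"
    using r by (intro powr_mono2) (auto intro: sum_nonneg)
  then show ?thesis using False by (simp add: lq_norm_def)
qed

lemma holder_real:
  fixes r s :: real and n :: nat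
  assumes rs: "r > 1" "s > 1" "1/r + 1/s = 1"
  shows "(\<Sum>i<n. \<bar>a i * b i\<bar>) \<le> (\<Sum>i<n. \<bar>a i\<bar> powr r) powr (1/r) * (\<Sum>i<n. \<bar>b i\<bar> powr s) powr (1/s)"
proof -
  define SA where "SA = (\<Sum>i<n. \<bar>a i\<bar> powr r)"
  define SB where "SB = (\<Sum>i<n. \<bar>b i\<bar> powr s)"
  define A where "A = SA powr (1/r)"
  define B where "B = SB powr (1/s)"
  have SA0: "0 \<le> SA" unfolding SA_def by (auto intro: sum_nonneg)
  have SB0: "0 \<le> SB" unfolding SB_def by (auto intro: sum_nonneg)
  have Ar: "A powr r = SA" unfolding A_def using rs SA0 by (simp add: powr_powr)
  have Bs: "B powr s = SB" unfolding B_def using rs SB0 by (simp add: powr_powr)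
  show ?thesis
  proof (cases "A = 0 \<or> B = 0")
    case True
    then show ?thesis
    proof
      assume "A = 0"
      then have "SA = 0" unfolding A_def by simp
      moreover have "\<forall>i\<in>{..<n}. 0 \<le> \<bar>a i\<bar> powr r" by simp
      ultimately have "\<forall>i\<in>{..<n}. \<bar>a i\<bar> powr r = 0" unfolding SA_def
        by (subst sum_nonneg_eq_0_iff[symmetric]) (use finite_lessThan in auto)
      then have "\<forall>i<n. a i = 0" by auto
      then show ?thesis by (simp add: A_def[symmetric] SA_def[symmetric] \<open>A = 0\<close>)
    next
      assume "B = 0"
      then have "SB = 0" unfolding B_def by simp
      moreover have "\<forall>i\<in>{..<n}. 0 \<le> \<bar>b i\<bar> powr s" by simp
      ultimately have "\<forall>i\<in>{..<n}. \<bar>b i\<bar> powr s = 0" unfolding SB_def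
        by (subst sum_nonneg_eq_0_iff[symmetric]) (use finite_lessThan in auto)
      then have "\<forall>i<n. b i = 0" by auto
      then show ?thesis by (simp add: B_def[symmetric] SB_def[symmetric] \<open>B = 0\<close>)
    qed
  next
    case False
    then have A0: "A > 0" and B0: "B > 0" unfolding A_def B_def by auto
    have "(\<Sum>i<n. \<bar>a i * b i\<bar>) / (A * B) = (\<Sum>i<n. (\<bar>a i\<bar> / A) * (\<bar>b i\<bar> / B))"
      by (simp add: sum_divide_distrib abs_mult)
    also have "\<dots> \<le> (\<Sum>i<n. (\<bar>a i\<bar> / A) powr r / r + (\<bar>b i\<bar> / B) powr s / s)"
      using rs A0 B0 by (intro sum_mono Youngs_inequality) auto
    also have "\<dots> = (\<Sum>i<n. \<bar>a i\<bar> powr r) / SA / r + (\<Sum>i<n. \<bar>b i\<bar> powr s) / SB / s"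
      by (simp add: powr_divide Ar Bs sum.distrib sum_divide_distrib)
    also have "\<dots> = 1"
      using A0 B0 Ar Bs rs unfolding SA_def[symmetric] SB_def[symmetric] by auto
    finally have "(\<Sum>i<n. \<bar>a i * b i\<bar>) \<le> A * B" using A0 B0 by (simp add: divide_le_eq)
    then show ?thesis unfolding A_def B_def SA_def SB_def .
  qed
qed


lemma lq_one: "lq_norm 1 n a = (\<Sum>i<n. \<bar>a i\<bar>)"
  by (simp add: lq_norm_def)

lemma lq_inf_ge: "i < n \<Longrightarrow> \<bar>a i\<bar> \<le> lq_norm \<infinity> n a"
  by (simp add: lq_norm_def)

lemma lq_cases_p:
  assumes "1 \<le> p"
  obtains "p = 1" "conj_exp p = \<infinity>" | "p = \<infinity>" "conj_exp p = 1"
  | r where "r > 1" "p = ereal r" "conj_exp p = ereal (r / (r - 1))"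
proof (cases "p = 1 \<or> p = \<infinity>")
  case True then show ?thesis using that by (auto simp: conj_exp_def)
next
  case False
  then obtain r where r: "p = ereal r" "r > 1" using assms
    by (cases p) auto
  then show ?thesis using False that(3)[of r] by (simp add: conj_exp_def)
qed

lemma holder_lq:
  assumes "1 \<le> p"
  shows "(\<Sum>i<n. \<bar>a i * b i\<bar>) \<le> lq_norm p n a * lq_norm (conj_exp p) n b"
  using assms
proof (cases rule: lq_cases_p)
  case 1
  have "(\<Sum>i<n. \<bar>a i * b i\<bar>) \<le> (\<Sum>i<n. \<bar>a i\<bar> * lq_norm \<infinity> n b)"
    unfolding abs_mult by (intro sum_mono mult_left_mono lq_inf_ge) auto
  then show ?thesis using 1 by (simp add: lq_one sum_distrib_right)
next
  case 2
  have "(\<Sum>i<n. \<bar>a i * b i\<bar>) \<le> (\<Sum>i<n. lq_norm \<infinity> n a * \<bar>b i\<bar>)"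
    unfolding abs_mult by (intro sum_mono mult_right_mono lq_inf_ge) auto
  then show ?thesis using 2 by (simp add: lq_one sum_distrib_left)
next
  case (3 r)
  have "1 / r + 1 / (r / (r - 1)) = 1" using 3 by (simp add: field_simps)
  moreover have "r / (r - 1) > 1" using 3 by (simp add: field_simps)
  ultimately show ?thesis using holder_real[where r=r and s="r / (r - 1)" and n=n and a=a and b=b] 3
    by (simp add: lq_norm_def)
qed

lemma duality_lq:
  assumes "1 \<le> p"
  shows "\<exists>a. (\<forall>i. 0 \<le> a i) \<and> lq_norm p n a \<le> 1 \<and>
     (\<Sum>i<n. a i * \<bar>b i\<bar>) = lq_norm (conj_exp p) n b"
  using assms
proof (cases rule: lq_cases_p)
  case 1
  define M where "M = Max (insert 0 ((\<lambda>i. \<bar>b i\<bar>) ` {..<n}))"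
  have M: "lq_norm (conj_exp p) n b = M" using 1 by (simp add: lq_norm_def M_def)
  have "M \<in> insert 0 ((\<lambda>i. \<bar>b i\<bar>) ` {..<n})" unfolding M_def by (rule Max_in) auto
  then show ?thesis
  proof
    assume "M = 0"
    then show ?thesis using M 1 by (intro exI[of _ "\<lambda>_. 0"]) (simp add: lq_norm_def)
  next
    assume "M \<in> (\<lambda>i. \<bar>b i\<bar>) ` {..<n}"
    then obtain j where j: "j < n" "M = \<bar>b j\<bar>" by auto
    have s1: "(\<Sum>i<n. \<bar>(if i = j then 1 else 0::real)\<bar>) = 1"
      using j by (simp add: sum.delta)
    have s2: "(\<Sum>i<n. (if i = j then 1 else 0) * \<bar>b i\<bar>) = \<bar>b j\<bar>"
    proof -
      have "(\<Sum>i<n. (if i = j then 1 else 0) * \<bar>b i\<bar>) = (\<Sum>i<n. if i = j then \<bar>b i\<bar> else 0)"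
        by (rule sum.cong) auto
      also have "\<dots> = \<bar>b j\<bar>" using j by simp
      finally show ?thesis using j by (simp add: sum.delta)
    qed
    show ?thesis using M 1 j s1 s2
      by (intro exI[of _ "\<lambda>i. if i = j then 1 else 0"]) (simp add: lq_one)
  qed
next
  case 2
  have "lq_norm \<infinity> n (\<lambda>_. 1) \<le> 1"
    by (simp add: lq_norm_def)
  then show ?thesis using 2
    by (intro exI[of _ "\<lambda>_. 1"]) (simp add: lq_one)
next
  case (3 r)
  define s where "s = r / (r - 1)"
  have s1: "s > 1" using 3 by (simp add: s_def field_simps)
  have rs: "(s - 1) * r = s" using 3 by (simp add: s_def field_simps)
  define N where "N = (\<Sum>i<n. \<bar>b i\<bar> powr s) powr (1 / s)"
  have NN: "lq_norm (conj_exp p) n b = N" using 3 by (simp add: lq_norm_def N_def s_def)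
  have S0: "0 \<le> (\<Sum>i<n. \<bar>b i\<bar> powr s)" by (auto intro: sum_nonneg)
  have Ns: "N powr s = (\<Sum>i<n. \<bar>b i\<bar> powr s)" unfolding N_def using s1 S0 by (simp add: powr_powr)
  show ?thesis
  proof (cases "N = 0")
    case True
    then show ?thesis using NN 3 by (intro exI[of _ "\<lambda>_. 0"]) (simp add: lq_norm_def)
  next
    case False
    then have N0: "N > 0" unfolding N_def by simp
    define a where "a i = \<bar>b i\<bar> powr (s - 1) / N powr (s - 1)" for i
    have a0: "\<forall>i. 0 \<le> a i" unfolding a_def by simp
    have "(\<Sum>i<n. a i * \<bar>b i\<bar>) = (\<Sum>i<n. \<bar>b i\<bar> powr s) / N powr (s - 1)"
    proof -
      have "a i * \<bar>b i\<bar> = \<bar>b i\<bar> powr s / N powr (s - 1)" for i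
      proof (cases "b i = 0")
        case True then show ?thesis using s1 by (simp add: a_def)
      next
        case False
        have "\<bar>b i\<bar> powr (s - 1) * \<bar>b i\<bar> = \<bar>b i\<bar> powr s"
          using False by (simp add: powr_diff)
        then show ?thesis by (simp add: a_def)
      qed
      then show ?thesis by (simp add: sum_divide_distrib)
    qed
    also have "\<dots> = N" using N0 by (simp add: Ns[symmetric] powr_diff)
    finally have e1: "(\<Sum>i<n. a i * \<bar>b i\<bar>) = N" .
    have "(\<Sum>i<n. \<bar>a i\<bar> powr r) = (\<Sum>i<n. \<bar>b i\<bar> powr s) / N powr s"
    proof -
      have "\<bar>a i\<bar> powr r = \<bar>b i\<bar> powr s / N powr s" for i
        using a0 unfolding a_def by (simp add: powr_divide powr_powr rs)
      then show ?thesis by (simp add: sum_divide_distrib)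
    qed
    also have "\<dots> = 1" using N0 by (simp add: Ns[symmetric])
    finally have "lq_norm p n a = 1" using 3 by (simp add: lq_norm_def)
    then show ?thesis using a0 e1 NN by (intro exI[of _ a]) auto
  qed
qed

lemma weak_nonneg:
  assumes "\<forall>i<n. bounded_linear (f i)" "0 \<le> q"
  shows "0 \<le> weak_norm q n f"
proof -
  have "\<forall>i\<in>{..<n}. \<exists>K. \<forall>y. norm (f i y) \<le> norm y * K"
    using assms(1) bounded_linear.bounded by blast
  then obtain K where K: "\<And>i y. i < n \<Longrightarrow> norm (f i y) \<le> norm y * K i"
    by (metis lessThan_iff bchoice)
  define L where "L = (\<Sum>i<n. \<bar>K i\<bar>)"
  have "lq_norm q n (\<lambda>i. f i y) \<le> lq_norm q n (\<lambda>_. L)" if "norm y \<le> 1" for y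
  proof (rule lq_mono[OF assms(2)], intro allI impI)
    fix i assume i: "i < n"
    have "\<bar>f i y\<bar> \<le> norm y * K i" using K[OF i] by simp
    also have "\<dots> \<le> norm y * \<bar>K i\<bar>"
      by (intro mult_left_mono) auto
    also have "\<dots> \<le> 1 * \<bar>K i\<bar>"
      using that by (intro mult_right_mono) auto
    also have "\<dots> \<le> L" unfolding L_def using i
      by (simp add: member_le_sum[where f = "\<lambda>i. \<bar>K i\<bar>"])
    finally show "\<bar>f i y\<bar> \<le> \<bar>L\<bar>" by simp
  qed
  then have bdd: "bdd_above ((\<lambda>y. lq_norm q n (\<lambda>i. f i y)) ` {y. norm y \<le> 1})"
    unfolding bdd_above_def by (intro exI[of _ "lq_norm q n (\<lambda>_. L)"]) auto
  have "lq_norm q n (\<lambda>i. f i 0) \<le> weak_norm q n f"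
    unfolding weak_norm_def by (rule cSUP_upper[OF _ bdd]) simp
  then show ?thesis using lq_nonneg[of q n "\<lambda>i. f i 0"] by linarith
qed


theorem corollary3p6:
  fixes p :: ereal and T :: "'a::banach \<Rightarrow> 'b::{banach, ordered_real_vector, lattice}"
  assumes "1 \<le> p"
    and "banach_lattice_norm TYPE('b)"
    and "bounded_linear T"
  shows "pos_p_majorizing p T \<longleftrightarrow> pos_strongly_p_summing p T"
proof
  have e01: "(0::ereal) \<le> 1" by simp
  have q0: "0 \<le> conj_exp p" using e01 conj_exp_ge1[OF assms(1)] by (rule order_trans)
  have p0: "0 \<le> p" using e01 assms(1) by (rule order_trans)
  have lT: "linear T" using assms(3) bounded_linear.linear by blast
  {
    assume "pos_p_majorizing p T"
    then obtain C where C: "C > 0" and H: "\<And>n (z::nat \<Rightarrow> 'a) (f::nat \<Rightarrow> 'b \<Rightarrow> real).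
      (\<forall>i<n. norm (z i) \<le> 1) \<Longrightarrow> (\<forall>i<n. pos_dual (f i)) \<Longrightarrow>
      lq_norm (conj_exp p) n (\<lambda>i. f i (T (z i))) \<le> C * weak_norm (conj_exp p) n f"
      unfolding pos_p_majorizing_def by blast
    show "pos_strongly_p_summing p T"
      unfolding pos_strongly_p_summing_def
    proof (intro exI[of _ C] conjI allI impI)
      show "C > 0" by fact
      fix n and x :: "nat \<Rightarrow> 'a" and f :: "nat \<Rightarrow> 'b \<Rightarrow> real"
      assume pf: "\<forall>i<n. pos_dual (f i)"
      define z where "z i = sgn (x i)" for i
      have nz: "\<forall>i<n. norm (z i) \<le> 1" by (simp add: z_def norm_sgn)
      have eq: "f i (T (x i)) = norm (x i) * f i (T (z i))" if "i < n" for i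
      proof -
        have lf: "linear (f i)" using pf that by (simp add: pos_dual_def bounded_linear.linear)
        have "x i = norm (x i) *\<^sub>R z i" by (cases "x i = 0") (simp_all add: z_def sgn_div_norm)
        then have "f i (T (x i)) = f i (T (norm (x i) *\<^sub>R z i))" by simp
        also have "\<dots> = norm (x i) * f i (T (z i))"
          using lT lf by (simp add: linear_scale)
        finally show ?thesis .
      qed
      have "(\<Sum>i<n. \<bar>f i (T (x i))\<bar>) = (\<Sum>i<n. \<bar>norm (x i) * f i (T (z i))\<bar>)"
        using eq by (intro sum.cong) auto
      also have "\<dots> \<le> lq_norm p n (\<lambda>i. norm (x i)) * lq_norm (conj_exp p) n (\<lambda>i. f i (T (z i)))"
        by (rule holder_lq[OF assms(1)])
      also have "\<dots> \<le> lq_norm p n (\<lambda>i. norm (x i)) * (C * weak_norm (conj_exp p) n f)"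
        using H[OF nz pf] by (intro mult_left_mono lq_nonneg)
      finally show "(\<Sum>i<n. \<bar>f i (T (x i))\<bar>) \<le> C * lq_norm p n (\<lambda>i. norm (x i)) * weak_norm (conj_exp p) n f"
        by (simp add: algebra_simps)
    qed
  }
  {
    assume "pos_strongly_p_summing p T"
    then obtain C where C: "C > 0" and H: "\<And>n (x::nat \<Rightarrow> 'a) (f::nat \<Rightarrow> 'b \<Rightarrow> real).
      (\<forall>i<n. pos_dual (f i)) \<Longrightarrow>
      (\<Sum>i<n. \<bar>f i (T (x i))\<bar>) \<le> C * lq_norm p n (\<lambda>i. norm (x i)) * weak_norm (conj_exp p) n f"
      unfolding pos_strongly_p_summing_def by blast
    show "pos_p_majorizing p T"
      unfolding pos_p_majorizing_def
    proof (intro exI[of _ C] conjI allI impI)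
      show "C > 0" by fact
      fix n and z :: "nat \<Rightarrow> 'a" and f :: "nat \<Rightarrow> 'b \<Rightarrow> real"
      assume nz: "\<forall>i<n. norm (z i) \<le> 1" and pf: "\<forall>i<n. pos_dual (f i)"
      define b where "b = (\<lambda>i. f i (T (z i)))"
      obtain a where a0: "\<forall>i. 0 \<le> a i" and a1: "lq_norm p n a \<le> 1"
        and a2: "(\<Sum>i<n. a i * \<bar>b i\<bar>) = lq_norm (conj_exp p) n b"
        using duality_lq[OF assms(1), of n b] by blast
      define x where "x i = a i *\<^sub>R z i" for i
      have eq: "\<bar>f i (T (x i))\<bar> = a i * \<bar>b i\<bar>" if "i < n" for i
      proof -
        have lf: "linear (f i)" using pf that by (simp add: pos_dual_def bounded_linear.linear)
        have "f i (T (x i)) = a i * b i"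
          using lT lf by (simp add: x_def b_def linear_scale)
        then show ?thesis using a0 by (simp add: abs_mult)
      qed
      have W0: "0 \<le> weak_norm (conj_exp p) n f"
        using pf q0 by (intro weak_nonneg) (auto simp: pos_dual_def)
      have Lx: "lq_norm p n (\<lambda>i. norm (x i)) \<le> 1"
      proof -
        have "lq_norm p n (\<lambda>i. norm (x i)) \<le> lq_norm p n a"
        proof (rule lq_mono[OF p0], intro allI impI)
          fix i assume i: "i < n"
          have "norm (x i) = \<bar>a i\<bar> * norm (z i)" by (simp add: x_def)
          also have "\<dots> \<le> \<bar>a i\<bar> * 1" using nz i by (intro mult_left_mono) auto
          finally show "\<bar>norm (x i)\<bar> \<le> \<bar>a i\<bar>" by simp
        qed
        then show ?thesis using a1 by linarith
      qed
      have "lq_norm (conj_exp p) n b = (\<Sum>i<n. a i * \<bar>b i\<bar>)"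
        using a2 by simp
      also have "\<dots> = (\<Sum>i<n. \<bar>f i (T (x i))\<bar>)"
        by (rule sum.cong) (use eq in auto)
      also have "\<dots> \<le> C * lq_norm p n (\<lambda>i. norm (x i)) * weak_norm (conj_exp p) n f"
        by (rule H[OF pf])
      also have "\<dots> \<le> C * 1 * weak_norm (conj_exp p) n f"
        using C W0 Lx by (intro mult_right_mono mult_left_mono) auto
      finally show "lq_norm (conj_exp p) n (\<lambda>i. f i (T (z i))) \<le> C * weak_norm (conj_exp p) n f"
        by (simp add: b_def)
    qed
  }
qed

end
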